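(* Let $\Lambda$ be a cohomology algebra of $b^+=1$ type with $I_T=0$ and $\Gamma\cong\langle1\rangle\oplus n\langle-1\rangle$, $0\le n\le9$, with orthogonal basis $\{H,E_1,\dots,E_n\}$, $H\cdot H=1$, $E_i\cdot E_i=-1$. Let $A=aH-\sum_{i=1}^nb_iE_i\ne0$ be reduced with $A\cdot A\ge0$. Then $h(A)=0$ exactly when $A\in\{H-E_1,\ H,\ 2H\}$ or $a=b_1+1$ with $b_1\ge1$, $b_2\in\{0,1\}$, $b_i=0$ for $i\ge3$; and $h(A)<0$ exactly when $A=a(H-E_1)$ with $a\ge2$. For all other such $A$, $h(A)>0$.
   Context: Notation: $\Lambda$ a cohomology algebra (graded commutative algebra over $\mathbb{Z}$, free of finite rank in each degree, $p:\Lambda^4\cong\mathbb{Z}$ with perfect pairings); $\Gamma(x,y)=x\cdot y=p(xy)$ on $\Lambda^2$, signature $\sigma$; $I_T\subseteq\Lambda^2$ generated by products of elements of $\Lambda^1$. Characteristic: $c\cdot A\equiv A\cdot A\pmod 2$ for all $A$. Since $I_T=0$, adjunction classes are the characteristic $c$ with $c\cdot c>\sigma$. $h_c(A)=1+\frac{A\cdot A-|c\cdot A|}{2}$ for $A\ne0$, $h_c(0)=0$; $h(A)=\max_c h_c(A)$ over adjunction classes. $A=aH-\sum b_iE_i$ is reduced if $b_1\ge\dots\ge b_n\ge0$ and $a\ge b_1$ ($n=1$), $a\ge b_1+b_2$ ($n=2$), $a\ge b_1+b_2+b_3$ ($n\ge3$), $a\ge0$ ($n=0$); coefficients $b_i$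 with $i>n$ are taken to be $0$. *)

theory Defs
  imports Main
begin

text \<open>The lattice Gamma = <1> + n<-1> in the orthogonal basis H, E_1, ..., E_n.
  A class is a pair (a, b) standing for  a H - sum_{i=1..n} b_i E_i.
  Only b_i with 1 <= i <= n may be nonzero.\<close>

type_synonym cls = "int \<times> (nat \<Rightarrow> int)"

definition in_Gamma :: "nat \<Rightarrow> cls \<Rightarrow> bool" where
  "in_Gamma n A \<longleftrightarrow> (\<forall>i. (i = 0 \<or> n < i) \<longrightarrow> snd A i = 0)"

definition zero_cls :: cls where
  "zero_cls = (0, \<lambda>_. 0)"

definition dot :: "nat \<Rightarrow> cls \<Rightarrow> cls \<Rightarrow> int" where
  "dot n A B = fst A * fst B - (\<Sum>i=1..n. snd A i * snd B i)"

definition signature :: "nat \<Rightarrow> int" where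
  "signature n = 1 - int n"

definition characteristic :: "nat \<Rightarrow> cls \<Rightarrow> bool" where
  "characteristic n c \<longleftrightarrow> in_Gamma n c \<and>
     (\<forall>A. in_Gamma n A \<longrightarrow> dot n c A mod 2 = dot n A A mod 2)"

text \<open>Since I_T = 0, adjunction classes are characteristic c with c.c > sigma.\<close>
definition adjunction_class :: "nat \<Rightarrow> cls \<Rightarrow> bool" where
  "adjunction_class n c \<longleftrightarrow> characteristic n c \<and> dot n c c > signature n"

text \<open>h_c(A) = 1 + (A.A - |c.A|)/2 for A nonzero, h_c(0) = 0.  For characteristic c
  the numerator is even, so integer division is exact.\<close>
definition h_c :: "nat \<Rightarrow> cls \<Rightarrow> cls \<Rightarrow> int" where
  "h_c n c A = (if A = zero_cls then 0 else 1 + (dot n A A - \<bar>dot n c A\<bar>) div 2)"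

definition h :: "nat \<Rightarrow> cls \<Rightarrow> int" where
  "h n A = (GREATEST k. \<exists>c. adjunction_class n c \<and> k = h_c n c A)"

definition reduced :: "nat \<Rightarrow> cls \<Rightarrow> bool" where
  "reduced n A \<longleftrightarrow>
     (let a = fst A; b = snd A in
       (\<forall>i j. 1 \<le> i \<longrightarrow> i \<le> j \<longrightarrow> j \<le> n \<longrightarrow> b j \<le> b i) \<and>
       (\<forall>i. 1 \<le> i \<longrightarrow> i \<le> n \<longrightarrow> 0 \<le> b i) \<and>
       (if n = 0 then a \<ge> 0
        else if n = 1 then a \<ge> b 1
        else if n = 2 then a \<ge> b 1 + b 2
        else a \<ge> b 1 + b 2 + b 3))"

definition H_cls :: cls where "H_cls = (1, \<lambda>_. 0)"
definition twoH_cls :: cls where "twoH_cls = (2, \<lambda>_. 0)"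
definition H_minus_E1 :: cls where "H_minus_E1 = (1, (\<lambda>_. 0)(1 := 1))"
definition mult_H_minus_E1 :: "int \<Rightarrow> cls" where
  "mult_H_minus_E1 k = (k, (\<lambda>_. 0)(1 := k))"

end

theory Submission imports Defs begin

lemma sum_f12:
  fixes f :: "nat \<Rightarrow> int"
  assumes "\<forall>i. 3 \<le> i \<longrightarrow> i \<le> n \<longrightarrow> f i \<le> 0" "0 \<le> f 1" "0 \<le> f 2"
  shows "sum f {1..n} \<le> f 1 + f 2"
  using assms(1)
proof (induction n)
  case 0 then show ?case using assms by simp
next
  case (Suc n)
  have IH: "sum f {1..n} \<le> f 1 + f 2" using Suc by auto
  show ?case
  proof (cases "n \<ge> 2")
    case True
    then have "f (Suc n) \<le> 0" using Suc.prems by auto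
    then show ?thesis using IH by (simp add: sum.cl_ivl_Suc)
  next
    case False
    then have "n = 0 \<or> n = 1" by auto
    then show ?thesis using assms by (auto simp: sum.cl_ivl_Suc numeral_2_eq_2)
  qed
qed

lemma sum9:
  fixes f :: "nat \<Rightarrow> int"
  assumes "\<forall>i. n < i \<longrightarrow> f i = 0" "n \<le> 9"
  shows "sum f {1..n} = f 1 + f 2 + f 3 + f 4 + f 5 + f 6 + f 7 + f 8 + f 9"
proof -
  have "sum f {1..n} = sum f {1..9}"
    by (rule sum.mono_neutral_left) (use assms in auto)
  also have "\<dots> = f 1 + f 2 + f 3 + f 4 + f 5 + f 6 + f 7 + f 8 + f 9"
    by (simp add: sum.cl_ivl_Suc numeral_eq_Suc)
  finally show ?thesis .
qed


lemma reduced_facts: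
  assumes "in_Gamma n A" "reduced n A"
  shows "\<forall>i. (i = 0 \<or> n < i) \<longrightarrow> snd A i = 0"
    and "\<forall>i. 0 \<le> snd A i"
    and "\<forall>i. snd A i \<le> snd A 1"
    and "\<forall>i. 3 \<le> i \<longrightarrow> snd A i \<le> snd A 3"
    and "snd A 2 \<le> snd A 1" "snd A 3 \<le> snd A 2"
    and "snd A 1 + snd A 2 + snd A 3 \<le> fst A"
proof -
  define b where "b = snd A"
  define a where "a = fst A"
  have bz: "\<And>i. i = 0 \<or> n < i \<Longrightarrow> b i = 0" using assms(1) unfolding in_Gamma_def b_def by auto
  have srt: "\<And>i j. 1 \<le> i \<Longrightarrow> i \<le> j \<Longrightarrow> j \<le> n \<Longrightarrow> b j \<le> b i"
    and nn: "\<And>i. 1 \<le> i \<Longrightarrow> i \<le> n \<Longrightarrow> 0 \<le> b i"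
    and ca: "(if n = 0 then a \<ge> 0
        else if n = 1 then a \<ge> b 1
        else if n = 2 then a \<ge> b 1 + b 2
        else a \<ge> b 1 + b 2 + b 3)"
    using assms(2) unfolding reduced_def Let_def a_def b_def by auto
  have bnn: "\<forall>i. 0 \<le> b i"
  proof
    fix i :: nat show "0 \<le> b i" using bz[of i] nn[of i] by (cases "i = 0 \<or> n < i") auto
  qed
  have b1: "\<forall>i. b i \<le> b 1"
  proof
    fix i :: nat show "b i \<le> b 1"
    proof (cases "i = 0 \<or> n < i")
      case True then show ?thesis using bz bnn by auto
    next
      case False then show ?thesis using srt[of 1 i] by auto
    qed
  qed
  have b3: "\<forall>i. 3 \<le> i \<longrightarrow> b i \<le> b 3"
  proof (intro allI impI)
    fix i :: nat assume "3 \<le> i" show "b i \<le> b 3"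
    proof (cases "n < i")
      case True then show ?thesis using bz bnn by auto
    next
      case False then show ?thesis using srt[of 3 i] \<open>3 \<le> i\<close> by auto
    qed
  qed
  have b21: "b 2 \<le> b 1" using b1 by auto
  have b32: "b 3 \<le> b 2"
  proof (cases "n < 3")
    case True then show ?thesis using bz[of 3] bnn by auto
  next
    case False then show ?thesis using srt[of 2 3] by auto
  qed
  have a123: "b 1 + b 2 + b 3 \<le> a"
  proof -
    consider "n = 0" | "n = 1" | "n = 2" | "n \<ge> 3" by linarith
    then show ?thesis
    proof cases
      case 1 then show ?thesis using ca bz[of 1] bz[of 2] bz[of 3] by auto
    next
      case 2 then show ?thesis using ca bz[of 2] bz[of 3] by auto
    next
      case 3 then show ?thesis using ca bz[of 3] by auto
    next
      case 4 then show ?thesis using ca by auto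
    qed
  qed
  show "\<forall>i. (i = 0 \<or> n < i) \<longrightarrow> snd A i = 0" using bz b_def by auto
  show "\<forall>i. 0 \<le> snd A i" using bnn b_def by auto
  show "\<forall>i. snd A i \<le> snd A 1" using b1 b_def by auto
  show "\<forall>i. 3 \<le> i \<longrightarrow> snd A i \<le> snd A 3" using b3 b_def by auto
  show "snd A 2 \<le> snd A 1" "snd A 3 \<le> snd A 2" using b21 b32 b_def by auto
  show "snd A 1 + snd A 2 + snd A 3 \<le> fst A" using a123 a_def b_def by auto
qed


lemma even_sq_minus: "even ((x::int) * x - x)"
proof -
  have "x * x - x = x * (x - 1)" by (simp add: algebra_simps)
  then show ?thesis by simp
qed

lemma even_e: "even ((x::int) * (x + 1))" by simp

lemma core:
  fixes c0 a :: int and c b :: "nat \<Rightarrow> int"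
  assumes n9: "n \<le> 9" and oc0: "odd c0" and c0p: "c0 > 0"
    and oc: "\<forall>i\<in>{1..n}. odd (c i)"
    and cc: "c0 * c0 - (\<Sum>i=1..n. c i * c i) > 1 - int n"
    and bnn: "\<forall>i. 0 \<le> b i"
    and b3: "\<forall>i. 3 \<le> i \<longrightarrow> b i \<le> b 3"
    and b21: "b 2 \<le> b 1" and b32: "b 3 \<le> b 2"
    and a123: "b 1 + b 2 + b 3 \<le> a"
  shows "3 * a - sum b {1..n} \<le> c0 * a - (\<Sum>i=1..n. c i * b i)"
proof -
  define e where "e i = (if i \<in> {1..n} then (\<bar>c i\<bar> - 1) div 2 else 0)" for i
  have ce: "\<bar>c i\<bar> = 2 * e i + 1" if "i \<in> {1..n}" for i
  proof -
    have "odd \<bar>c i\<bar>" using oc that by simp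
    then have "even (\<bar>c i\<bar> - 1)" by simp
    then show ?thesis using that unfolding e_def by auto
  qed
  have enn: "0 \<le> e i" for i
  proof (cases "i \<in> {1..n}")
    case True
    have "c i \<noteq> 0" using oc True by fastforce
    then have "1 \<le> \<bar>c i\<bar>" by linarith
    then show ?thesis unfolding e_def using True by simp
  next
    case False
    have "e i = 0" unfolding e_def using False by (rule if_not_P)
    then show ?thesis by simp
  qed
  have csq: "c i * c i = 4 * (e i * (e i + 1)) + 1" if "i \<in> {1..n}" for i
  proof -
    have "c i * c i = \<bar>c i\<bar> * \<bar>c i\<bar>" by (simp add: abs_mult_self_eq)
    also have "\<dots> = (2 * e i + 1) * (2 * e i + 1)" using ce[OF that] by simp
    also have "\<dots> = 4 * (e i * (e i + 1)) + 1" by (simp add: algebra_simps)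
    finally show ?thesis .
  qed
  define Z where "Z = (\<Sum>i=1..n. e i * (e i + 1))"
  have sumcc: "(\<Sum>i=1..n. c i * c i) = 4 * Z + int n"
  proof -
    have "(\<Sum>i=1..n. c i * c i) = (\<Sum>i=1..n. 4 * (e i * (e i + 1)) + 1)"
      by (rule sum.cong) (use csq in auto)
    also have "\<dots> = 4 * Z + int n" by (simp add: sum.distrib sum_distrib_left Z_def)
    finally show ?thesis .
  qed
  have Znn: "0 \<le> Z" unfolding Z_def by (rule sum_nonneg) (use enn in auto)
  have Zev: "even Z" unfolding Z_def by (rule dvd_sum) simp
  obtain k where k: "c0 = 2 * k + 1" using oc0 by (metis oddE)
  have "c0 * c0 > 1" using cc sumcc Znn by linarith
  then have "c0 \<noteq> 1" by auto
  then have k1: "k \<ge> 1" using k c0p by linarith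
  define m where "m = k - 1"
  have m0: "m \<ge> 0" and cm: "c0 = 2 * m + 3" using k k1 m_def by auto
  have "(2*m+3)*(2*m+3) > 1 + 4 * Z" using cc sumcc cm by simp
  then have "4 * (m*m + 3*m + 2) > 4 * Z" by (simp add: algebra_simps)
  then have "Z < m*m + 3*m + 2" by simp
  then have Z1: "Z \<le> m*m + 3*m + 1" by linarith
  have mev: "even (m*m + 3*m)"
  proof -
    have "m*m + 3*m = m * (m + 1) + 2 * m" by (simp add: algebra_simps)
    then show ?thesis by simp
  qed
  have ZZ: "Z \<le> m*m + 3*m"
  proof (rule ccontr)
    assume "\<not> ?thesis"
    then have "Z = m*m + 3*m + 1" using Z1 by linarith
    then show False using Zev mev by simp
  qed
  have eterm: "e i * (e i + 1) \<le> Z" if "i \<in> {1..n}" for i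
    unfolding Z_def by (rule member_le_sum) (use enn that in auto)
  have em: "e i \<le> m" for i
  proof (cases "i \<in> {1..n}")
    case False
    have "e i = 0" unfolding e_def using False by (rule if_not_P)
    then show ?thesis using m0 by simp
  next
    case True
    show ?thesis
    proof (rule ccontr)
      assume "\<not> e i \<le> m"
      then have h1: "e i \<ge> m + 1" by simp
      have "(m+1)*(m+2) \<le> e i * (e i + 1)"
        by (rule mult_mono) (use h1 m0 in auto)
      then have "m*m + 3*m + 2 \<le> Z" using eterm[OF True] by (simp add: algebra_simps)
      then show False using ZZ by linarith
    qed
  qed
  define E where "E = (\<Sum>i=1..n. e i)"
  define S2 where "S2 = (\<Sum>i=1..n. e i * e i)"
  have ZS: "Z = S2 + E" unfolding Z_def S2_def E_def by (simp add: algebra_simps sum.distrib)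
  have tang: "0 \<le> 9 * S2 - 6 * m * E + int n * (m * m)"
  proof -
    have "0 \<le> (\<Sum>i=1..n. (3 * e i - m) * (3 * e i - m))" by (rule sum_nonneg) simp
    also have "\<dots> = (\<Sum>i=1..n. 9 * (e i * e i) - 6 * m * e i + m * m)"
      by (rule sum.cong) (simp_all add: algebra_simps)
    also have "\<dots> = 9 * S2 - 6 * m * E + int n * (m * m)"
      by (simp add: sum.distrib sum_subtractf sum_distrib_left S2_def E_def)
    finally show ?thesis .
  qed
  have E3: "E \<le> 3 * m"
  proof (rule ccontr)
    assume "\<not> ?thesis"
    then have hE: "E \<ge> 3 * m + 1" by simp
    have "int n * (m * m) \<le> 9 * (m * m)" by (rule mult_right_mono) (use n9 in auto)
    moreover have "(6*m+9)*(3*m+1) \<le> (6*m+9) * E" by (rule mult_left_mono) (use hE m0 in auto)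
    moreover have "(6*m+9)*(3*m+1) = 18*(m*m) + 33*m + 9" by (simp add: algebra_simps)
    moreover have "(6*m+9) * E = 6 * m * E + 9 * E" by (simp add: algebra_simps)
    ultimately have "9 * S2 + 9 * E > 9 * (m*m) + 27*m" using tang m0 by linarith
    then have "9 * Z > 9 * (m*m) + 27*m" using ZS by simp
    then show False using ZZ by linarith
  qed
  have seb: "(\<Sum>i=1..n. e i * b i) \<le> m * a"
  proof -
    have split: "(\<Sum>i=1..n. e i * b i) = b 3 * E + (\<Sum>i=1..n. e i * (b i - b 3))"
      by (simp add: E_def sum_distrib_left algebra_simps sum.distrib sum_subtractf)
    have "(\<Sum>i=1..n. e i * (b i - b 3)) \<le> e 1 * (b 1 - b 3) + e 2 * (b 2 - b 3)"
    proof (rule sum_f12)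
      show "\<forall>i. 3 \<le> i \<longrightarrow> i \<le> n \<longrightarrow> e i * (b i - b 3) \<le> 0"
        using enn b3 by (auto intro: mult_nonneg_nonpos)
      show "0 \<le> e 1 * (b 1 - b 3)" using enn b21 b32 by auto
      show "0 \<le> e 2 * (b 2 - b 3)" using enn b32 by auto
    qed
    moreover have "e 1 * (b 1 - b 3) \<le> m * (b 1 - b 3)"
      by (rule mult_right_mono) (use em b21 b32 in auto)
    moreover have "e 2 * (b 2 - b 3) \<le> m * (b 2 - b 3)"
      by (rule mult_right_mono) (use em b32 in auto)
    moreover have "b 3 * E \<le> b 3 * (3 * m)"
      by (rule mult_left_mono) (use E3 bnn in auto)
    moreover have "m * (b 1 + b 2 + b 3) \<le> m * a"
      by (rule mult_left_mono) (use a123 m0 in auto)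
    ultimately show ?thesis using split by (simp add: algebra_simps)
  qed
  have scb: "(\<Sum>i=1..n. c i * b i) \<le> 2 * (\<Sum>i=1..n. e i * b i) + sum b {1..n}"
  proof -
    have "(\<Sum>i=1..n. c i * b i) \<le> (\<Sum>i=1..n. (2 * e i + 1) * b i)"
    proof (rule sum_mono)
      fix i assume i: "i \<in> {1..n}"
      have "c i * b i \<le> \<bar>c i\<bar> * b i" by (rule mult_right_mono) (use bnn in auto)
      then show "c i * b i \<le> (2 * e i + 1) * b i" using ce[OF i] by simp
    qed
    also have "\<dots> = 2 * (\<Sum>i=1..n. e i * b i) + sum b {1..n}"
      by (simp add: algebra_simps sum.distrib sum_distrib_left)
    finally show ?thesis .
  qed
  have "c0 * a = 2 * (m * a) + 3 * a" using cm by (simp add: algebra_simps)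
  then show ?thesis using seb scb by linarith
qed


lemma char_odd:
  assumes "characteristic n c"
  shows "odd (fst c)" and "\<forall>i\<in>{1..n}. odd (snd c i)"
proof -
  have ch: "\<And>B. in_Gamma n B \<Longrightarrow> dot n c B mod 2 = dot n B B mod 2"
    using assms unfolding characteristic_def by auto
  have "in_Gamma n (1, \<lambda>_. 0)" unfolding in_Gamma_def by simp
  from ch[OF this] have "fst c mod 2 = 1" unfolding dot_def by simp
  then show "odd (fst c)" by (simp add: odd_iff_mod_2_eq_one)
  show "\<forall>i\<in>{1..n}. odd (snd c i)"
  proof
    fix i assume i: "i \<in> {1..n}"
    define B :: cls where "B = (0, \<lambda>j. if j = i then 1 else 0)"
    have "in_Gamma n B" unfolding in_Gamma_def B_def using i by auto
    from ch[OF this] have eq: "dot n c B mod 2 = dot n B B mod 2" .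
    have d1: "dot n c B = - snd c i"
    proof -
      have "(\<Sum>j=1..n. snd c j * snd B j) = (\<Sum>j=1..n. if j = i then snd c i else 0)"
        by (rule sum.cong) (auto simp: B_def)
      also have "\<dots> = snd c i" using i by simp
      finally show ?thesis unfolding dot_def B_def by simp
    qed
    have d2: "dot n B B = -1"
    proof -
      have "(\<Sum>j=1..n. snd B j * snd B j) = (\<Sum>j=1..n. if j = i then 1 else 0)"
        by (rule sum.cong) (auto simp: B_def)
      also have "\<dots> = (1::int)" using i by simp
      finally show ?thesis unfolding dot_def B_def by simp
    qed
    have "(- snd c i) mod 2 = 1" using eq d1 d2 by simp
    then have "odd (- snd c i)" by (metis odd_iff_mod_2_eq_one)
    then show "odd (snd c i)" by simp
  qed
qed

lemma adj_bound:
  assumes n9: "n \<le> 9" and adj: "adjunction_class n c" and G: "in_Gamma n A" and R: "reduced n A"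
  shows "3 * fst A - sum (snd A) {1..n} \<le> \<bar>dot n c A\<bar>"
proof -
  note rf = reduced_facts[OF G R]
  have ch: "characteristic n c" and cc: "dot n c c > signature n"
    using adj unfolding adjunction_class_def by auto
  note od = char_odd[OF ch]
  have cc': "fst c * fst c - (\<Sum>i=1..n. snd c i * snd c i) > 1 - int n"
    using cc unfolding dot_def signature_def by simp
  have "fst c \<noteq> 0" using od(1) by auto
  then consider "fst c > 0" | "fst c < 0" by linarith
  then show ?thesis
  proof cases
    case 1
    have "3 * fst A - sum (snd A) {1..n} \<le> fst c * fst A - (\<Sum>i=1..n. snd c i * snd A i)"
      by (rule core[OF n9 od(1) 1 od(2) cc' rf(2) rf(4) rf(5) rf(6) rf(7)])
    then show ?thesis unfolding dot_def by linarith
  next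
    case 2
    have o1: "odd (- fst c)" using od(1) by simp
    have o2: "\<forall>i\<in>{1..n}. odd (- snd c i)" using od(2) by simp
    have p: "- fst c > 0" using 2 by simp
    have cc2: "(- fst c) * (- fst c) - (\<Sum>i=1..n. (- snd c i) * (- snd c i)) > 1 - int n"
      using cc' by simp
    have "3 * fst A - sum (snd A) {1..n} \<le> (- fst c) * fst A - (\<Sum>i=1..n. (- snd c i) * snd A i)"
      by (rule core[OF n9 o1 p o2 cc2 rf(2) rf(4) rf(5) rf(6) rf(7)])
    moreover have "(\<Sum>i=1..n. (- snd c i) * snd A i) = - (\<Sum>i=1..n. snd c i * snd A i)"
      by (simp add: sum_negf)
    ultimately show ?thesis unfolding dot_def by linarith
  qed
qed


definition Kc :: "nat \<Rightarrow> cls" where "Kc n = (3, \<lambda>i. if 1 \<le> i \<and> i \<le> n then 1 else 0)"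

lemma dot_K: "dot n (Kc n) B = 3 * fst B - sum (snd B) {1..n}"
proof -
  have "(\<Sum>i=1..n. snd (Kc n) i * snd B i) = sum (snd B) {1..n}"
    by (rule sum.cong) (auto simp: Kc_def)
  then show ?thesis unfolding dot_def Kc_def by simp
qed

lemma adj_K: "adjunction_class n (Kc n)"
proof -
  have G: "in_Gamma n (Kc n)" unfolding in_Gamma_def Kc_def by auto
  have ch: "characteristic n (Kc n)"
    unfolding characteristic_def
  proof (intro conjI allI impI G)
    fix B :: cls assume "in_Gamma n B"
    define x where "x = fst B"
    define y where "y = snd B"
    have e1: "dot n (Kc n) B = 3 * x - sum y {1..n}" using dot_K x_def y_def by simp
    have e2: "dot n B B = x * x - (\<Sum>i=1..n. y i * y i)" unfolding dot_def x_def y_def by simp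
    have eqd: "3 * x - sum y {1..n} - (x * x - (\<Sum>i=1..n. y i * y i))
        = 2 * x - (x * x - x) + (\<Sum>i=1..n. y i * y i - y i)"
      by (simp add: sum_subtractf algebra_simps)
    have ev1: "even (\<Sum>i=1..n. y i * y i - y i)" by (rule dvd_sum) (rule even_sq_minus)
    have ev2: "even (x * x - x)" by (rule even_sq_minus)
    have "even (3 * x - sum y {1..n} - (x * x - (\<Sum>i=1..n. y i * y i)))"
      unfolding eqd by (intro dvd_add dvd_diff ev1 ev2) simp
    then show "dot n (Kc n) B mod 2 = dot n B B mod 2" using e1 e2 by (simp add: mod_eq_dvd_iff)
  qed
  have "dot n (Kc n) (Kc n) = 9 - int n" unfolding dot_K by (simp add: Kc_def)
  then show ?thesis unfolding adjunction_class_def signature_def using ch by simp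
qed

lemma KA_nonneg:
  assumes n9: "n \<le> 9" and G: "in_Gamma n A" and R: "reduced n A"
  shows "0 \<le> 3 * fst A - sum (snd A) {1..n}"
proof -
  note rf = reduced_facts[OF G R]
  define b where "b = snd A"
  have "(\<Sum>i=1..n. b i - b 3) \<le> (b 1 - b 3) + (b 2 - b 3)"
    by (rule sum_f12) (use rf b_def in auto)
  moreover have "(\<Sum>i=1..n. b i - b 3) = sum b {1..n} - int n * b 3"
    by (simp add: sum_subtractf)
  moreover have "int n * b 3 \<le> 9 * b 3" by (rule mult_right_mono) (use n9 rf(2) b_def in auto)
  moreover have "b 2 \<le> b 1" "b 3 \<le> b 2" "b 1 + b 2 + b 3 \<le> fst A" "0 \<le> b 3"
    using rf b_def by auto
  ultimately have "sum b {1..n} \<le> 3 * fst A" by linarith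
  then show ?thesis using b_def by simp
qed

lemma hval:
  assumes n9: "n \<le> 9" and G: "in_Gamma n A" and R: "reduced n A" and nz: "A \<noteq> zero_cls"
  shows "h n A = 1 + (dot n A A - (3 * fst A - sum (snd A) {1..n})) div 2"
proof -
  let ?KA = "3 * fst A - sum (snd A) {1..n}"
  have KA: "0 \<le> ?KA" by (rule KA_nonneg[OF n9 G R])
  have hK: "h_c n (Kc n) A = 1 + (dot n A A - ?KA) div 2"
    unfolding h_c_def using nz KA dot_K by simp
  have "h n A = h_c n (Kc n) A"
    unfolding h_def
  proof (rule Greatest_equality)
    show "\<exists>c. adjunction_class n c \<and> h_c n (Kc n) A = h_c n c A" using adj_K by blast
  next
    fix y assume "\<exists>c. adjunction_class n c \<and> y = h_c n c A"
    then obtain c where c: "adjunction_class n c" "y = h_c n c A" by blast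
    have "?KA \<le> \<bar>dot n c A\<bar>" by (rule adj_bound[OF n9 c(1) G R])
    then have "(dot n A A - \<bar>dot n c A\<bar>) div 2 \<le> (dot n A A - ?KA) div 2"
      by (intro zdiv_mono1) auto
    then show "y \<le> h_c n (Kc n) A" using c(2) hK nz unfolding h_c_def by simp
  qed
  then show ?thesis using hK by simp
qed


lemma hard_pos:
  fixes a d t b1 b2 X Y :: int
  assumes ad: "a = b1 + d" and d2: "d \<ge> 2" and b11: "b1 \<ge> 1"
    and b21: "b2 \<le> b1" and tb2: "t \<le> b2" and t0: "0 \<le> t" and bd: "b2 + t \<le> d"
    and XY: "X \<le> (t - 1) * Y" and Y0: "0 \<le> Y"
    and XQ: "X + Y \<le> a*a - b1*b1 - b2*b2"
  shows "a*a - 3*a - (b1*b1 - b1) - (b2*b2 - b2) - X + 2 > 0"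
proof -
  define P where "P = a*a - 3*a - (b1*b1 - b1) - (b2*b2 - b2) + 2"
  define Q where "Q = a*a - b1*b1 - b2*b2"
  show ?thesis
  proof (cases "t \<le> 1")
    case True
    have "(t - 1) * Y \<le> 0" by (rule mult_nonpos_nonneg) (use True Y0 in auto)
    then have X0: "X \<le> 0" using XY by linarith
    have Pe: "P = 2*(b1*(d-1)) + (d-1)*(d-2) - b2*(b2-1)"
      unfolding P_def ad by (simp add: algebra_simps)
    have "b2*(b2-1) \<le> b1*(d-1)"
    proof (cases "b2 \<ge> 1")
      case True
      show ?thesis by (rule mult_mono) (use True b21 bd t0 d2 in auto)
    next
      case False
      then have "b2 \<le> 0" by simp
      moreover have "b2 \<ge> 0" using tb2 t0 by simp
      ultimately have "b2 = 0" by simp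
      moreover have "0 \<le> b1*(d-1)" using b11 d2 by simp
      ultimately show ?thesis by simp
    qed
    moreover have "1 \<le> b1*(d-1)"
    proof -
      have "1 * 1 \<le> b1*(d-1)" by (rule mult_mono) (use b11 d2 in auto)
      then show ?thesis by simp
    qed
    moreover have "0 \<le> (d-1)*(d-2)" using d2 by simp
    ultimately have "P > 0" using Pe by linarith
    then show ?thesis using X0 P_def by linarith
  next
    case False
    then have t2: "t \<ge> 2" by simp
    define u where "u = b2 - t"
    define v where "v = b1 - b2"
    define w where "w = d - 2*t"
    have u0: "u \<ge> 0" and v0: "v \<ge> 0" and wu: "w \<ge> u" using u_def v_def w_def tb2 b21 bd by auto
    have Fe: "t*P - (t-1)*Q = 3*t*w + u*t + 2*u*w + 2*v*(t+w) + (w-u)*(w+u) + 2*t"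
    proof -
      have b2e: "b2 = t + u" and b1e: "b1 = t + u + v" and de: "d = 2*t + w"
        using u_def v_def w_def by auto
      show ?thesis unfolding P_def Q_def ad b1e b2e de by (simp add: algebra_simps)
    qed
    have "0 \<le> 3*t*w" using t0 wu u0 by simp
    moreover have "0 \<le> u*t" using t0 u0 by simp
    moreover have "0 \<le> 2*u*w" using wu u0 by simp
    moreover have "0 \<le> 2*v*(t+w)" using v0 t0 wu u0 by simp
    moreover have "0 \<le> (w-u)*(w+u)" using wu u0 by simp
    ultimately have F0: "t*P - (t-1)*Q > 0" using Fe t2 by linarith
    have "t*X = (t-1)*X + X" by (simp add: algebra_simps)
    moreover have "(t-1)*(X+Y) = (t-1)*X + (t-1)*Y" by (simp add: algebra_simps)
    moreover have "(t-1)*(X+Y) \<le> (t-1)*Q" by (rule mult_left_mono) (use XQ Q_def t2 in auto)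
    ultimately have tX: "t*X \<le> (t-1)*Q" using XY by linarith
    have "t*(P - X) = t*P - t*X" by (simp add: algebra_simps)
    then have "t*(P - X) > 0" using tX F0 by linarith
    then have "P - X > 0" using t2 by (simp add: zero_less_mult_iff)
    then show ?thesis using P_def by linarith
  qed
qed


theorem mainTheorem11:
  fixes n :: nat and A :: cls
  assumes "n \<le> 9"
    and "in_Gamma n A"
    and "A \<noteq> zero_cls"
    and "reduced n A"
    and "dot n A A \<ge> 0"
  shows "(h n A = 0 \<longleftrightarrow>
            (A \<in> {H_minus_E1, H_cls, twoH_cls} \<or>
             (fst A = snd A 1 + 1 \<and> snd A 1 \<ge> 1 \<and> snd A 2 \<in> {0, 1} \<and>
              (\<forall>i\<ge>3. snd A i = 0))))
       \<and> (h n A < 0 \<longleftrightarrow> (\<exists>k\<ge>2. A = mult_H_minus_E1 k))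
       \<and> (\<not> (A \<in> {H_minus_E1, H_cls, twoH_cls} \<or>
               (fst A = snd A 1 + 1 \<and> snd A 1 \<ge> 1 \<and> snd A 2 \<in> {0, 1} \<and>
                (\<forall>i\<ge>3. snd A i = 0)))
          \<and> \<not> (\<exists>k\<ge>2. A = mult_H_minus_E1 k) \<longrightarrow> h n A > 0)"
    (is "(?h0 \<longleftrightarrow> ?P1) \<and> (?hn \<longleftrightarrow> ?P2) \<and> ?rest")
proof -
  note rf = reduced_facts[OF assms(2) assms(4)]
  define a where "a = fst A"
  define b where "b = snd A"
  have Aab: "A = (a, b)" by (simp add: a_def b_def)
  have bz: "\<And>i. i = 0 \<or> n < i \<Longrightarrow> b i = 0" using rf(1) b_def by auto
  have bnn: "\<And>i. 0 \<le> b i" using rf(2) b_def by auto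
  have bl1: "\<And>i. b i \<le> b 1" using rf(3) b_def by auto
  have bl3: "\<And>i. 3 \<le> i \<Longrightarrow> b i \<le> b 3" using rf(4) b_def by auto
  have b21: "b 2 \<le> b 1" and b32: "b 3 \<le> b 2" and a123: "b 1 + b 2 + b 3 \<le> a"
    using rf a_def b_def by auto
  have KA: "dot n (Kc n) A = 3*a - sum b {1..n}" using dot_K a_def b_def by simp
  have AA: "dot n A A = a*a - (\<Sum>i=1..n. b i * b i)" unfolding dot_def a_def b_def by simp
  have hv: "h n A = 1 + (dot n A A - dot n (Kc n) A) div 2"
    using hval[OF assms(1) assms(2) assms(4) assms(3)] KA a_def b_def by simp
  have ev: "even (dot n A A - dot n (Kc n) A)"
  proof -
    have "characteristic n (Kc n)" using adj_K unfolding adjunction_class_def by simp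
    then have "\<forall>B. in_Gamma n B \<longrightarrow> dot n (Kc n) B mod 2 = dot n B B mod 2"
      unfolding characteristic_def by (rule conjunct2)
    then have "dot n (Kc n) A mod 2 = dot n A A mod 2"
      using assms(2) by blast
    then have "2 dvd (dot n (Kc n) A - dot n A A)" by (simp only: mod_eq_dvd_iff)
    then show ?thesis by (metis dvd_minus_iff minus_diff_eq)
  qed
  define G where "G = dot n A A - dot n (Kc n) A + 2"
  have hG: "G = 2 * h n A" using hv ev unfolding G_def by (auto elim!: evenE)
  have s1: "sum b {1..n} = b 1 + b 2 + b 3 + b 4 + b 5 + b 6 + b 7 + b 8 + b 9"
    by (rule sum9) (use bz assms(1) in auto)
  have s2: "(\<Sum>i=1..n. b i * b i) = b 1 * b 1 + b 2 * b 2 + b 3 * b 3 + b 4 * b 4 + b 5 * b 5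
      + b 6 * b 6 + b 7 * b 7 + b 8 * b 8 + b 9 * b 9"
    by (rule sum9) (use bz assms(1) in auto)
  define X where "X = (b 3 * b 3 - b 3) + (b 4 * b 4 - b 4) + (b 5 * b 5 - b 5) + (b 6 * b 6 - b 6)
     + (b 7 * b 7 - b 7) + (b 8 * b 8 - b 8) + (b 9 * b 9 - b 9)"
  define Y where "Y = b 3 + b 4 + b 5 + b 6 + b 7 + b 8 + b 9"
  have Gf: "G = a*a - 3*a - (b 1 * b 1 - b 1) - (b 2 * b 2 - b 2) - X + 2"
    unfolding G_def AA KA s1 s2 X_def by simp
  have AA0: "X + Y \<le> a*a - b 1 * b 1 - b 2 * b 2"
    using assms(5) unfolding AA s2 X_def Y_def by simp
  have pHE: "A = H_minus_E1 \<Longrightarrow> a = 1 \<and> b 1 = 1" by (simp add: Aab H_minus_E1_def)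
  have pH: "A = H_cls \<Longrightarrow> a = 1 \<and> b 1 = 0" by (simp add: Aab H_cls_def)
  have p2H: "A = twoH_cls \<Longrightarrow> a = 2 \<and> b 1 = 0" by (simp add: Aab twoH_cls_def)
  have pM: "\<And>k. A = mult_H_minus_E1 k \<Longrightarrow> a = k \<and> b 1 = k" by (simp add: Aab mult_H_minus_E1_def)
  have b3z: "\<And>i. 3 \<le> i \<Longrightarrow> b 3 = 0 \<Longrightarrow> b i = 0" using bl3 bnn by (metis order_antisym)
  have "a \<ge> b 1" using a123 bnn[of 2] bnn[of 3] by linarith
  then consider (c0) "a = b 1" | (c1) "a = b 1 + 1" | (c2) "a \<ge> b 1 + 2" by linarith
  then show ?thesis
  proof cases
    case c0
    have b2z: "b 2 = 0" and b3: "b 3 = 0" using c0 a123 bnn[of 2] bnn[of 3] by auto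
    have bo: "b = (\<lambda>_. 0)(1 := b 1)"
    proof
      fix i show "b i = ((\<lambda>_. 0)(1 := b 1)) i"
      proof -
        consider "i = 0" | "i = 1" | "i = 2" | "i \<ge> 3" by linarith
        then show ?thesis using bz[of 0] b2z b3z[OF _ b3] by cases auto
      qed
    qed
    have X0: "X = 0" unfolding X_def using b3z[OF _ b3] b3 by simp
    have "b 1 \<noteq> 0"
    proof
      assume "b 1 = 0"
      then have "A = zero_cls" using Aab bo c0 unfolding zero_cls_def by (simp add: fun_eq_iff)
      then show False using assms(3) by simp
    qed
    then have b1p: "b 1 \<ge> 1" using bnn[of 1] by linarith
    have GG: "G = 2 - 2 * b 1" using Gf X0 b2z c0 by (simp add: algebra_simps)
    show ?thesis
    proof (cases "b 1 = 1")
      case True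
      have "A = H_minus_E1" using Aab bo c0 True unfolding H_minus_E1_def by simp
      then have p1: ?P1 by simp
      have np2: "\<not> ?P2" using pM c0 True by force
      have "h n A = 0" using hG GG True by simp
      then show ?thesis using p1 np2 by simp
    next
      case False
      then have b12: "b 1 \<ge> 2" using b1p by simp
      have "A = mult_H_minus_E1 (b 1)" using Aab bo c0 unfolding mult_H_minus_E1_def by simp
      then have p2: ?P2 using b12 by blast
      have np1: "\<not> ?P1" using pHE pH p2H c0 b12 a_def b_def by auto
      have "h n A < 0" using hG GG b12 by simp
      then show ?thesis using p2 np1 by simp
    qed
  next
    case c1
    have b3: "b 3 = 0" using c1 a123 b32 bnn[of 3] by linarith
    have b2: "b 2 = 0 \<or> b 2 = 1" using c1 a123 bnn[of 2] bnn[of 3] by linarith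
    have X0: "X = 0" unfolding X_def using b3z[OF _ b3] b3 by simp
    have "G = 0" using Gf X0 c1 b2 by (auto simp: algebra_simps)
    then have hz: "h n A = 0" using hG by simp
    have np2: "\<not> ?P2" using pM c1 by force
    have p1: ?P1
    proof (cases "b 1 = 0")
      case True
      then have b2z: "b 2 = 0" using b2 b21 by auto
      have "b = (\<lambda>_. 0)"
      proof
        fix i show "b i = 0"
        proof -
          consider "i = 0" | "i = 1" | "i = 2" | "i \<ge> 3" by linarith
          then show ?thesis using bz[of 0] b2z True b3z[OF _ b3] by cases auto
        qed
      qed
      then have "A = H_cls" using Aab c1 True unfolding H_cls_def by simp
      then show ?thesis by simp
    next
      case False
      then have "b 1 \<ge> 1" using bnn[of 1] by linarith
      moreover have "\<forall>i\<ge>3. snd A i = 0" using b3z[OF _ b3] b_def by auto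
      ultimately show ?thesis using c1 b2 a_def b_def by auto
    qed
    show ?thesis using hz p1 np2 by simp
  next
    case c2
    have np2: "\<not> ?P2" using pM c2 by force
    show ?thesis
    proof (cases "b 1 = 0")
      case True
      have bzz: "b = (\<lambda>_. 0)" using bl1 bnn True by (metis order_antisym ext)
      then have X0: "X = 0" and b2z: "b 2 = 0" unfolding X_def by simp_all
      have Ge: "G = (a - 1) * (a - 2)" using Gf X0 b2z True by (simp add: algebra_simps)
      show ?thesis
      proof (cases "a = 2")
        case True
        have "A = twoH_cls" using Aab bzz True unfolding twoH_cls_def by simp
        then have p1: ?P1 by simp
        have "h n A = 0" using hG Ge True by simp
        then show ?thesis using p1 np2 by simp
      next
        case False
        then have a3: "a \<ge> 3" using c2 True by linarith
        have np1: "\<not> ?P1" using pHE pH p2H a3 True a_def b_def by auto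
        have "1 * 1 \<le> (a - 1) * (a - 2)" by (rule mult_mono) (use a3 in auto)
        then have "h n A > 0" using hG Ge by simp
        then show ?thesis using np1 np2 by simp
      qed
    next
      case False
      then have b11: "b 1 \<ge> 1" using bnn[of 1] by linarith
      have np1: "\<not> ?P1" using pHE pH p2H c2 b11 a_def b_def by auto
      have XY: "X \<le> (b 3 - 1) * Y"
      proof -
        have t: "b i * b i - b i \<le> (b 3 - 1) * b i" if "3 \<le> i" for i
        proof -
          have "b i * (b i - 1) \<le> b i * (b 3 - 1)"
            by (rule mult_left_mono) (use bl3[OF that] bnn in auto)
          then show ?thesis by (simp add: algebra_simps)
        qed
        have "(b 3 - 1) * Y = (b 3 - 1) * b 3 + (b 3 - 1) * b 4 + (b 3 - 1) * b 5 + (b 3 - 1) * b 6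
          + (b 3 - 1) * b 7 + (b 3 - 1) * b 8 + (b 3 - 1) * b 9"
          unfolding Y_def by (simp add: algebra_simps)
        then show ?thesis unfolding X_def using t[of 3] t[of 4] t[of 5] t[of 6] t[of 7] t[of 8] t[of 9]
          by simp
      qed
      have Y0: "0 \<le> Y" unfolding Y_def using bnn by (simp add: add_nonneg_nonneg)
      have "a*a - 3*a - (b 1 * b 1 - b 1) - (b 2 * b 2 - b 2) - X + 2 > 0"
        by (rule hard_pos[of a "b 1" "a - b 1" "b 2" "b 3"])
           (use c2 b11 b21 b32 bnn[of 3] a123 XY Y0 AA0 in auto)
      then have "h n A > 0" using hG Gf by simp
      then show ?thesis using np1 np2 by simp
    qed
  qed
qed

end
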